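(* (Stability condition for D-GLDPC codes.) Consider a D-GLDPC ensemble on the BEC with channel erasure probability $q\in[0,1]$, whose variable node decoder has EXIT function $$I_{E,V}(p,q)=\sum_{j\ge2}\lambda^{(\mathrm r)}_j(1-q\,p^{j-1})+\sum_i\lambda_iI^{(i)}_{E,V}(p,q),$$ where each $I^{(i)}_{E,V}$ is the variable-node EXIT function (for a fixed generator matrix $\mathbf{G}^{(i)}_V$) of an $(n_i,k_i)$ binary linear code $\mathcal{V}_i$ with $d_{\min}(\mathcal{V}_i)\ge2$, and whose check node decoder is as in the context, with all check component codes $\mathcal{C}_i$ of minimum distance at least $2$. Let $D_C$ be as in the context and assume $D_C>0$. Then $$-\frac{\partial I_{E,V}(p,q)}{\partial p}\Big|_{p=0}=q\lambda^{(\mathrm r)}_2+\sum_{i:\,d_{\min}(\mathcal{V}_i)=2}\ \sum_{z=0}^{k_i}q^z(1-q)^{k_i-z}\frac{2\lambda_i}{n_i}\Delta^{(i)}_{n_i-2,k_i-z},$$ so the stability condition $-\frac{\partial I_{E,V}}{\partial p}\big|_{p=0}\le D_C^{-1}$ reads $$q\lambda^{(\mathrm r)}_2+\sum_{i:\,d_{\min}(\mathcal{V}_i)=2}\sum_{z=0}^{k_i}q^z(1-q)^{k_i-z}\frac{2\lambda_i\Delta^{(i)}_{n_i-2,k_i-z}}{n_i}\le\Big[\rho'_{\mathrm{SPC}}(1)+\sum_{i:\,d_{\min}(\mathcal{C}_i)=2}\frac{2\rho_i}{n_i}\Delta^{(i)}_{n_i-2}\Big]^{-1}.$$ In particular, if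 every generalized variable component code $\mathcal{V}_i$ has $d_{\min}\ge3$ and $\lambda^{(\mathrm r)}_2>0$, the stability condition is equivalent to $q\le[\lambda^{(\mathrm r)}_2D_C]^{-1}$ (with equality in the stability condition iff $q=[\lambda^{(\mathrm r)}_2D_C]^{-1}$), and if moreover all generalized check component codes have $d_{\min}\ge3$, it is equivalent to $q\le[\lambda^{(\mathrm r)}_2\rho'_{\mathrm{SPC}}(1)]^{-1}$.
   Context: Edge fractions $\lambda^{(\mathrm r)}_j,\lambda_i\ge0$ sum to $1$; $\rho^{(\mathrm{SPC})}_j,\rho_i\ge0$ sum to $1$. Check node decoder EXIT function: $I_{E,C}(p)=\sum_{j\ge2}\rho^{(\mathrm{SPC})}_j(1-p)^{j-1}+\sum_i\rho_iI^{(i)}_{E,C}(p)$, where for an $(n,k)$ check code with generator matrix $\mathbf{G}$ (rank $k$), $I_{E}(p)=1-\frac1n\sum_{t=0}^{n-1}a_tp^t(1-p)^{n-t-1}$, $a_t=(n-t)\tilde e_{n-t}-(t+1)\tilde e_{n-t-1}$, $\tilde e_g=\sum_{|S|=g}\operatorname{rank}(\mathbf{G}_S)$ over $g$-element column sets. $\rho'_{\mathrm{SPC}}(1)=\sum_j(j-1)\rho^{(\mathrm{SPC})}_j$, $\Delta^{(i)}_{n_i-2}=\sum_{|S|=n_i-2}(k_i-\operatorname{rank}(\mathbf{G}^{(i)}_S))$ for a generator matrix of $\mathcal{C}_i$, and $D_C=\rho'_{\mathrm{SPC}}(1)+\sum_{i:\,d_{\min}(\mathcal{C}_i)=2}\frac{2\rho_i}{n_i}\Delta^{(i)}_{n_i-2}$.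 For an $(n,k)$ variable code with generator matrix $\mathbf{G}$ and $\mathbf{I}_k$ the identity: $\tilde e_{g,h}=\sum_{S,T}\operatorname{rank}[\mathbf{G}_S|(\mathbf{I}_k)_T]$ over $g$-element column sets $S$ of $\mathbf{G}$ and $h$-element column sets $T$ of $\mathbf{I}_k$; $a_{t,z}=(n-t)\tilde e_{n-t,k-z}-(t+1)\tilde e_{n-t-1,k-z}$; variable-node EXIT function $I_E(p,q)=1-\frac1n\sum_{t=0}^{n-1}\sum_{z=0}^ka_{t,z}p^t(1-p)^{n-t-1}q^z(1-q)^{k-z}$; and $\Delta_{n-2,k-z}=\sum_{S,T}(k-\operatorname{rank}[\mathbf{G}_S|(\mathbf{I}_k)_T])$ over $(n-2)$-element $S$ and $(k-z)$-element $T$. $\Delta^{(i)}_{n_i-2,k_i-z}$ is this quantity for $\mathbf{G}^{(i)}_V$. *)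

theory Defs
  imports "HOL-Analysis.Analysis"
begin

text \<open>A binary matrix is a function G :: nat => nat => bool, G i j being the
entry in row i (i < k) and column j (j < n); True encodes 1 in GF(2).
A family of vectors of GF(2)^k is given by v :: 'a => nat => bool (v a i is
the i-th coordinate of vector a, i < k).\<close>

text \<open>Linear independence over GF(2): no nonempty subfamily sums to zero.\<close>
definition gf2_indep :: "nat \<Rightarrow> ('a \<Rightarrow> nat \<Rightarrow> bool) \<Rightarrow> 'a set \<Rightarrow> bool" where
  "gf2_indep k v U \<longleftrightarrow>
     (\<forall>W\<subseteq>U. W \<noteq> {} \<longrightarrow> (\<exists>i<k. odd (card {a\<in>W. v a i})))"

definition gf2_rank :: "nat \<Rightarrow> ('a \<Rightarrow> nat \<Rightarrow> bool) \<Rightarrow> 'a set \<Rightarrow> nat" where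
  "gf2_rank k v A = Max (card ` {U. U \<subseteq> A \<and> gf2_indep k v U})"

definition gcol :: "(nat \<Rightarrow> nat \<Rightarrow> bool) \<Rightarrow> nat \<Rightarrow> nat \<Rightarrow> bool" where
  "gcol G j i = G i j"

definition rank_sub :: "nat \<Rightarrow> (nat \<Rightarrow> nat \<Rightarrow> bool) \<Rightarrow> nat set \<Rightarrow> nat" where
  "rank_sub k G S = gf2_rank k (gcol G) S"

text \<open>Columns of the augmented matrix [G | I_k]: Inl j is column j of G,
Inr t is column t of the k x k identity.\<close>
definition aug_col :: "(nat \<Rightarrow> nat \<Rightarrow> bool) \<Rightarrow> nat + nat \<Rightarrow> nat \<Rightarrow> bool" where
  "aug_col G c i = (case c of Inl j \<Rightarrow> G i j | Inr t \<Rightarrow> i = t)"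

definition rank_aug :: "nat \<Rightarrow> (nat \<Rightarrow> nat \<Rightarrow> bool) \<Rightarrow> nat set \<Rightarrow> nat set \<Rightarrow> nat" where
  "rank_aug k G S T = gf2_rank k (aug_col G) (Inl ` S \<union> Inr ` T)"

definition is_gen_matrix :: "nat \<Rightarrow> nat \<Rightarrow> (nat \<Rightarrow> nat \<Rightarrow> bool) \<Rightarrow> bool" where
  "is_gen_matrix k n G \<longleftrightarrow> 0 < k \<and> rank_sub k G {..<n} = k"

text \<open>Codeword u G for the message with support U (subset of {..<k}).\<close>
definition codeword :: "(nat \<Rightarrow> nat \<Rightarrow> bool) \<Rightarrow> nat set \<Rightarrow> nat \<Rightarrow> bool" where
  "codeword G U j = odd (card {i\<in>U. G i j})"

definition dmin :: "nat \<Rightarrow> nat \<Rightarrow> (nat \<Rightarrow> nat \<Rightarrow> bool) \<Rightarrow> nat" where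
  "dmin k n G = Min {card {j\<in>{..<n}. codeword G U j} | U.
                      U \<subseteq> {..<k} \<and> (\<exists>j<n. codeword G U j)}"

definition subsets_of_card :: "nat \<Rightarrow> nat \<Rightarrow> nat set set" where
  "subsets_of_card n g = {S. S \<subseteq> {..<n} \<and> card S = g}"

definition etilde :: "nat \<Rightarrow> nat \<Rightarrow> (nat \<Rightarrow> nat \<Rightarrow> bool) \<Rightarrow> nat \<Rightarrow> real" where
  "etilde k n G g = (\<Sum>S\<in>subsets_of_card n g. real (rank_sub k G S))"

definition IEC_code :: "nat \<Rightarrow> nat \<Rightarrow> (nat \<Rightarrow> nat \<Rightarrow> bool) \<Rightarrow> real \<Rightarrow> real" where
  "IEC_code k n G p = 1 - 1 / real n * (\<Sum>t<n.
      (real (n - t) * etilde k n G (n - t) - real (t + 1) * etilde k n G (n - t - 1))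
      * p ^ t * (1 - p) ^ (n - t - 1))"

definition DeltaC :: "nat \<Rightarrow> nat \<Rightarrow> (nat \<Rightarrow> nat \<Rightarrow> bool) \<Rightarrow> nat \<Rightarrow> real" where
  "DeltaC k n G g = (\<Sum>S\<in>subsets_of_card n g. real k - real (rank_sub k G S))"

definition rho_SPC_deriv :: "nat \<Rightarrow> (nat \<Rightarrow> real) \<Rightarrow> real" where
  "rho_SPC_deriv Jc rhoS = (\<Sum>j=2..Jc. real (j - 1) * rhoS j)"

text \<open>D_C for check components i < NC with length nC i, dimension kC i,
generator matrix GC i and edge fraction rhoC i.\<close>
definition D_C :: "nat \<Rightarrow> (nat \<Rightarrow> real) \<Rightarrow> nat \<Rightarrow> (nat \<Rightarrow> nat) \<Rightarrow> (nat \<Rightarrow> nat)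
    \<Rightarrow> (nat \<Rightarrow> nat \<Rightarrow> nat \<Rightarrow> bool) \<Rightarrow> (nat \<Rightarrow> real) \<Rightarrow> real" where
  "D_C Jc rhoS NC nC kC GC rhoC =
     rho_SPC_deriv Jc rhoS +
     (\<Sum>i\<in>{i. i < NC \<and> dmin (kC i) (nC i) (GC i) = 2}.
        2 * rhoC i / real (nC i) * DeltaC (kC i) (nC i) (GC i) (nC i - 2))"

definition etilde2 :: "nat \<Rightarrow> nat \<Rightarrow> (nat \<Rightarrow> nat \<Rightarrow> bool) \<Rightarrow> nat \<Rightarrow> nat \<Rightarrow> real" where
  "etilde2 k n G g h = (\<Sum>S\<in>subsets_of_card n g. \<Sum>T\<in>subsets_of_card k h.
      real (rank_aug k G S T))"

definition a_tz :: "nat \<Rightarrow> nat \<Rightarrow> (nat \<Rightarrow> nat \<Rightarrow> bool) \<Rightarrow> nat \<Rightarrow> nat \<Rightarrow> real" where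
  "a_tz k n G t z = real (n - t) * etilde2 k n G (n - t) (k - z)
                    - real (t + 1) * etilde2 k n G (n - t - 1) (k - z)"

definition IEV_code :: "nat \<Rightarrow> nat \<Rightarrow> (nat \<Rightarrow> nat \<Rightarrow> bool) \<Rightarrow> real \<Rightarrow> real \<Rightarrow> real" where
  "IEV_code k n G p q = 1 - 1 / real n * (\<Sum>t<n. \<Sum>z\<le>k.
      a_tz k n G t z * p ^ t * (1 - p) ^ (n - t - 1) * q ^ z * (1 - q) ^ (k - z))"

definition DeltaV :: "nat \<Rightarrow> nat \<Rightarrow> (nat \<Rightarrow> nat \<Rightarrow> bool) \<Rightarrow> nat \<Rightarrow> nat \<Rightarrow> real" where
  "DeltaV k n G g h = (\<Sum>S\<in>subsets_of_card n g. \<Sum>T\<in>subsets_of_card k h.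
      real k - real (rank_aug k G S T))"

text \<open>EXIT function of the D-GLDPC variable node decoder: repetition codes of
degrees j in {2..Jv} with edge fractions lamr j, and generalized variable
components i < NV with length nV i, dimension kV i, generator matrix GV i and
edge fraction lamV i.\<close>
definition IEV_ens :: "nat \<Rightarrow> (nat \<Rightarrow> real) \<Rightarrow> nat \<Rightarrow> (nat \<Rightarrow> nat) \<Rightarrow> (nat \<Rightarrow> nat)
    \<Rightarrow> (nat \<Rightarrow> nat \<Rightarrow> nat \<Rightarrow> bool) \<Rightarrow> (nat \<Rightarrow> real) \<Rightarrow> real \<Rightarrow> real \<Rightarrow> real" where
  "IEV_ens Jv lamr NV nV kV GV lamV p q =
     (\<Sum>j=2..Jv. lamr j * (1 - q * p ^ (j - 1))) +
     (\<Sum>i<NV. lamV i * IEV_code (kV i) (nV i) (GV i) p q)"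

end

theory Submission imports Defs begin

lemma cnt: "finite A \<Longrightarrow> card {a\<in>A. P a} = (\<Sum>a\<in>A. if P a then 1 else 0::nat)"
  by (simp add: sum.inter_filter[symmetric])

lemma sd_par: "finite A \<Longrightarrow> finite B \<Longrightarrow>
   odd (card ((A - B) \<union> (B - A))) \<longleftrightarrow> (odd (card A) \<noteq> odd (card B))"
proof -
  assume f: "finite A" "finite B"
  have "card ((A - B) \<union> (B - A)) = card (A - B) + card (B - A)"
    using f by (intro card_Un_disjoint) auto
  moreover have "card (A - B) = card A - card (A \<inter> B)" using f by (intro card_Diff_subset_Int) auto
  moreover have "card (B - A) = card B - card (A \<inter> B)" using f card_Diff_subset_Int
    by (metis Int_commute finite_Int)
  moreover have "card (A \<inter> B) \<le> card A" "card (A \<inter> B) \<le> card B" using f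
    by (auto intro: card_mono)
  ultimately have e: "card ((A - B) \<union> (B - A)) + 2 * card (A \<inter> B) = card A + card B"
    by linarith
  have "odd (card ((A - B) \<union> (B - A))) \<longleftrightarrow> odd (card ((A - B) \<union> (B - A)) + 2 * card (A \<inter> B))"
    by simp
  also have "\<dots> \<longleftrightarrow> odd (card A + card B)" using e by simp
  finally show ?thesis by simp
qed

lemma sd_filter: "{a\<in>(W1 - W2) \<union> (W2 - W1). P a} =
   ({a\<in>W1. P a} - {a\<in>W2. P a}) \<union> ({a\<in>W2. P a} - {a\<in>W1. P a})" by auto

lemma sd_par2: "finite W1 \<Longrightarrow> finite W2 \<Longrightarrow>
   odd (card {a\<in>(W1 - W2) \<union> (W2 - W1). P a}) \<longleftrightarrow>
   (odd (card {a\<in>W1. P a}) \<noteq> odd (card {a\<in>W2. P a}))"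
  unfolding sd_filter by (rule sd_par) auto

lemma dswap: "finite U \<Longrightarrow> finite W \<Longrightarrow>
  (\<Sum>i\<in>U. card {x\<in>W. P x i}) = (\<Sum>x\<in>W. card {i\<in>U. P x i})"
  by (simp add: cnt, rule sum.swap)

lemma indep_card_le:
  assumes "finite U" "gf2_indep k v U" shows "card U \<le> k"
proof -
  define \<phi> where "\<phi> W = {i\<in>{..<k}. odd (card {a\<in>W. v a i})}" for W
  have inj: "inj_on \<phi> (Pow U)"
  proof (rule inj_onI)
    fix W1 W2 assume W: "W1 \<in> Pow U" "W2 \<in> Pow U" "\<phi> W1 = \<phi> W2"
    show "W1 = W2"
    proof (rule ccontr)
      assume ne: "W1 \<noteq> W2"
      let ?W = "(W1 - W2) \<union> (W2 - W1)"
      have "?W \<subseteq> U" "?W \<noteq> {}" using W ne by auto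
      then obtain i where i: "i < k" "odd (card {a\<in>?W. v a i})"
        using assms(2) unfolding gf2_indep_def by blast
      have fin: "finite W1" "finite W2" using W assms(1) finite_subset by auto
      have "odd (card {a\<in>W1. v a i}) \<noteq> odd (card {a\<in>W2. v a i})"
        using i(2) sd_par2[OF fin] by simp
      moreover have "i \<in> \<phi> W1 \<longleftrightarrow> i \<in> \<phi> W2" using W(3) by simp
      ultimately show False using i(1) unfolding \<phi>_def by auto
    qed
  qed
  have "\<phi> ` Pow U \<subseteq> Pow {..<k}" unfolding \<phi>_def by auto
  hence "card (Pow U) \<le> card (Pow {..<k::nat})"
    using card_inj_on_le[OF inj] by simp
  hence "(2::nat)^card U \<le> 2^k" using assms(1) by (simp add: card_Pow)
  thus ?thesis by simp
qed

lemma indep_empty: "gf2_indep k v {}" unfolding gf2_indep_def by auto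

lemma indep_subset: "gf2_indep k v U \<Longrightarrow> V \<subseteq> U \<Longrightarrow> gf2_indep k v V"
  unfolding gf2_indep_def by auto

lemma rank_fin: "finite A \<Longrightarrow> finite (card ` {U. U \<subseteq> A \<and> gf2_indep k v U})"
  by (rule finite_imageI, rule finite_subset[of _ "Pow A"]) auto

lemma rank_ne: "card ` {U. U \<subseteq> A \<and> gf2_indep k v U} \<noteq> {}"
  using indep_empty by blast

lemma rank_ge: "finite A \<Longrightarrow> U \<subseteq> A \<Longrightarrow> gf2_indep k v U \<Longrightarrow> card U \<le> gf2_rank k v A"
  unfolding gf2_rank_def by (rule Max_ge[OF rank_fin]) auto

lemma rank_wit: "finite A \<Longrightarrow> \<exists>U\<subseteq>A. gf2_indep k v U \<and> card U = gf2_rank k v A"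
proof -
  assume f: "finite A"
  have "gf2_rank k v A \<in> card ` {U. U \<subseteq> A \<and> gf2_indep k v U}"
    unfolding gf2_rank_def by (rule Max_in[OF rank_fin[OF f] rank_ne])
  thus ?thesis by auto
qed

lemma rank_le_k: "finite A \<Longrightarrow> gf2_rank k v A \<le> k"
proof -
  assume f: "finite A"
  obtain U where "U \<subseteq> A" "gf2_indep k v U" "card U = gf2_rank k v A" using rank_wit[OF f] by blast
  moreover have "finite U" using f \<open>U \<subseteq> A\<close> finite_subset by blast
  ultimately show ?thesis using indep_card_le by metis
qed


lemma dual:
  assumes f: "finite A" and r: "gf2_rank k v A < k"
  shows "\<exists>U\<subseteq>{..<k}. U \<noteq> {} \<and> (\<forall>a\<in>A. even (card {i\<in>U. v a i}))"
proof -
  obtain B where B: "B \<subseteq> A" "gf2_indep k v B" "card B = gf2_rank k v A"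
    using rank_wit[OF f] by blast
  have fB: "finite B" using B(1) f finite_subset by blast
  define \<psi> where "\<psi> U = {b\<in>B. odd (card {i\<in>U. v b i})}" for U
  have "\<not> inj_on \<psi> (Pow {..<k})"
  proof
    assume inj: "inj_on \<psi> (Pow {..<k})"
    have "\<psi> ` Pow {..<k} \<subseteq> Pow B" unfolding \<psi>_def by auto
    hence "card (Pow {..<k::nat}) \<le> card (Pow B)" using card_inj_on_le[OF inj] fB by simp
    hence "(2::nat)^k \<le> 2^card B" using fB by (simp add: card_Pow)
    thus False using r B(3) by simp
  qed
  then obtain U1 U2 where U: "U1 \<subseteq> {..<k}" "U2 \<subseteq> {..<k}" "U1 \<noteq> U2" "\<psi> U1 = \<psi> U2"
    unfolding inj_on_def by blast
  define U where "U = (U1 - U2) \<union> (U2 - U1)"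
  have fU: "finite U1" "finite U2" using U(1,2) by (meson finite_lessThan finite_subset)+
  have Uk: "U \<subseteq> {..<k}" "U \<noteq> {}" using U unfolding U_def by auto
  have evB: "even (card {i\<in>U. v b i})" if "b \<in> B" for b
  proof -
    have "b \<in> \<psi> U1 \<longleftrightarrow> b \<in> \<psi> U2" using U(4) by simp
    hence "odd (card {i\<in>U1. v b i}) = odd (card {i\<in>U2. v b i})" using that unfolding \<psi>_def by auto
    thus ?thesis unfolding U_def using sd_par2[OF fU, of "\<lambda>i. v b i"] by simp
  qed
  have "even (card {i\<in>U. v a i})" if a: "a \<in> A" for a
  proof (cases "a \<in> B")
    case True thus ?thesis using evB by blast
  next
    case False
    have "\<not> gf2_indep k v (insert a B)"
    proof
      assume "gf2_indep k v (insert a B)"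
      hence "card (insert a B) \<le> gf2_rank k v A" using rank_ge[OF f] a B(1) by auto
      thus False using False fB B(3) by simp
    qed
    then obtain W where W: "W \<subseteq> insert a B" "W \<noteq> {}" "\<forall>i<k. even (card {x\<in>W. v x i})"
      unfolding gf2_indep_def by auto
    have aW: "a \<in> W"
    proof (rule ccontr)
      assume "a \<notin> W" hence "W \<subseteq> B" using W(1) by auto
      thus False using B(2) W(2,3) unfolding gf2_indep_def by auto
    qed
    have fW: "finite W" using W(1) fB finite_subset by blast
    have fUU: "finite U" using Uk(1) finite_subset by blast
    have "even (\<Sum>i\<in>U. card {x\<in>W. v x i})"
      using W(3) Uk(1) by (intro dvd_sum) auto
    also have "(\<Sum>i\<in>U. card {x\<in>W. v x i}) = (\<Sum>x\<in>W. card {i\<in>U. v x i})"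
      by (rule dswap[OF fUU fW])
    also have "\<dots> = card {i\<in>U. v a i} + (\<Sum>x\<in>W - {a}. card {i\<in>U. v x i})"
      using aW fW by (simp add: sum.remove)
    finally have e1: "even (card {i\<in>U. v a i} + (\<Sum>x\<in>W - {a}. card {i\<in>U. v x i}))" .
    have "even (\<Sum>x\<in>W - {a}. card {i\<in>U. v x i})"
      using W(1) evB by (intro dvd_sum) auto
    with e1 show ?thesis by simp
  qed
  with Uk show ?thesis by blast
qed

lemma gen_nz:
  assumes G: "is_gen_matrix k n G" and U: "U \<subseteq> {..<k}" "i0 \<in> U"
  shows "\<exists>j<n. codeword G U j"
proof (rule ccontr)
  assume "\<not> ?thesis"
  hence ev: "\<forall>j<n. even (card {i\<in>U. G i j})" unfolding codeword_def by auto
  obtain B where B: "B \<subseteq> {..<n}" "gf2_indep k (gcol G) B" "card B = k"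
    using rank_wit[of "{..<n}" k "gcol G"] G unfolding is_gen_matrix_def rank_sub_def by auto
  have fB: "finite B" using B(1) finite_subset by blast
  define \<phi> where "\<phi> W = {i\<in>{..<k}. odd (card {a\<in>W. G i a})}" for W
  have inj: "inj_on \<phi> (Pow B)"
  proof (rule inj_onI)
    fix W1 W2 assume W: "W1 \<in> Pow B" "W2 \<in> Pow B" "\<phi> W1 = \<phi> W2"
    show "W1 = W2"
    proof (rule ccontr)
      assume ne: "W1 \<noteq> W2"
      let ?W = "(W1 - W2) \<union> (W2 - W1)"
      have "?W \<subseteq> B" "?W \<noteq> {}" using W ne by auto
      then obtain i where i: "i < k" "odd (card {a\<in>?W. gcol G a i})"
        using B(2) unfolding gf2_indep_def by blast
      have fin: "finite W1" "finite W2" using W fB finite_subset by auto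
      have "odd (card {a\<in>W1. G i a}) \<noteq> odd (card {a\<in>W2. G i a})"
        using i(2) sd_par2[OF fin, of "\<lambda>a. G i a"] by (simp add: gcol_def)
      moreover have "i \<in> \<phi> W1 \<longleftrightarrow> i \<in> \<phi> W2" using W(3) by simp
      ultimately show False using i(1) unfolding \<phi>_def by auto
    qed
  qed
  have sub: "\<phi> ` Pow B \<subseteq> Pow {..<k}" unfolding \<phi>_def by auto
  moreover have "card (\<phi> ` Pow B) = card (Pow {..<k::nat})"
    using card_image[OF inj] fB B(3) by (simp add: card_Pow)
  ultimately have "\<phi> ` Pow B = Pow {..<k}" by (intro card_subset_eq) auto
  moreover have "{i0} \<in> Pow {..<k}" using U by auto
  ultimately obtain W where W: "W \<subseteq> B" "\<phi> W = {i0}" by (metis PowD imageE)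
  have fW: "finite W" using W(1) fB finite_subset by blast
  have fU: "finite U" using U(1) finite_subset by blast
  have "even (\<Sum>a\<in>W. card {i\<in>U. G i a})"
    using ev W(1) B(1) by (intro dvd_sum) auto
  also have "(\<Sum>a\<in>W. card {i\<in>U. G i a}) = (\<Sum>i\<in>U. card {a\<in>W. G i a})"
    by (rule dswap[OF fU fW, symmetric])
  also have "\<dots> = card {a\<in>W. G i0 a} + (\<Sum>i\<in>U - {i0}. card {a\<in>W. G i a})"
    using U fU by (simp add: sum.remove)
  finally have e1: "even (card {a\<in>W. G i0 a} + (\<Sum>i\<in>U - {i0}. card {a\<in>W. G i a}))" .
  have "even (\<Sum>i\<in>U - {i0}. card {a\<in>W. G i a})"
  proof (intro dvd_sum)
    fix i assume "i \<in> U - {i0}"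
    hence "i < k" "i \<notin> \<phi> W" using U W(2) by auto
    thus "even (card {a\<in>W. G i a})" unfolding \<phi>_def by auto
  qed
  moreover have "odd (card {a\<in>W. G i0 a})" using W(2) unfolding \<phi>_def by auto
  ultimately show False using e1 by simp
qed

lemma dmin_le: "U \<subseteq> {..<k} \<Longrightarrow> \<exists>j<n. codeword G U j \<Longrightarrow>
    dmin k n G \<le> card {j\<in>{..<n}. codeword G U j}"
  unfolding dmin_def
proof (rule Min_le)
  show "finite {card {j\<in>{..<n}. codeword G U j} |U. U \<subseteq> {..<k} \<and> (\<exists>j<n. codeword G U j)}"
    by (rule finite_image_set, rule finite_subset[of _ "Pow {..<k}"]) auto
qed auto

lemma rank_full:
  assumes G: "is_gen_matrix k n G" and S: "S \<subseteq> {..<n}" and d: "n - card S < dmin k n G"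
  shows "rank_sub k G S = k"
proof (rule ccontr)
  have fS: "finite S" using S finite_subset by blast
  assume "rank_sub k G S \<noteq> k"
  hence "gf2_rank k (gcol G) S < k" using rank_le_k[OF fS, of k "gcol G"]
    unfolding rank_sub_def by linarith
  then obtain U where U: "U \<subseteq> {..<k}" "U \<noteq> {}" "\<forall>a\<in>S. even (card {i\<in>U. gcol G a i})"
    using dual[OF fS] by blast
  then obtain i0 where "i0 \<in> U" by blast
  then obtain j where j: "j<n" "codeword G U j" using gen_nz[OF G U(1)] by blast
  have "dmin k n G \<le> card {j\<in>{..<n}. codeword G U j}" using dmin_le U(1) j by blast
  also have "\<dots> \<le> card ({..<n} - S)" using U(3)
    by (intro card_mono) (auto simp: codeword_def gcol_def)
  also have "\<dots> = n - card S" using S fS by (simp add: card_Diff_subset)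
  finally show False using d by simp
qed

lemma rank_aug_full:
  fixes S T :: "nat set"
  assumes "rank_sub k G S = k" "finite S" "finite T"
  shows "rank_aug k G S T = k"
proof (rule antisym)
  show "rank_aug k G S T \<le> k" unfolding rank_aug_def using assms(2,3) by (intro rank_le_k) auto
  obtain B where B: "B \<subseteq> S" "gf2_indep k (gcol G) B" "card B = k"
    using rank_wit[OF assms(2), of k "gcol G"] assms(1) unfolding rank_sub_def by auto
  have "gf2_indep k (aug_col G) (Inl ` B)"
    unfolding gf2_indep_def
  proof (intro allI impI)
    fix W :: "(nat + nat) set" assume W: "W \<subseteq> Inl ` B" "W \<noteq> {}"
    define W0 where "W0 = {b. Inl b \<in> W}"
    have WW: "W = Inl ` W0" using W unfolding W0_def by auto
    hence "W0 \<subseteq> B" "W0 \<noteq> {}" using W by auto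
    then obtain i where i: "i<k" "odd (card {a\<in>W0. gcol G a i})"
      using B(2) unfolding gf2_indep_def by blast
    have "{a\<in>W. aug_col G a i} = Inl ` {a\<in>W0. gcol G a i}" using WW
      by (auto simp: aug_col_def gcol_def)
    hence "card {a\<in>W. aug_col G a i} = card {a\<in>W0. gcol G a i}" by (simp add: card_image)
    thus "\<exists>i<k. odd (card {a\<in>W. aug_col G a i})" using i by auto
  qed
  note ind = this
  have f2: "finite (Inl ` S \<union> Inr ` T)" using assms(2,3) by auto
  have s2: "Inl ` B \<subseteq> Inl ` S \<union> Inr ` T" using B(1) by auto
  have "card (Inl ` B :: (nat + nat) set) \<le> rank_aug k G S T" unfolding rank_aug_def
    by (rule rank_ge[OF f2 s2 ind])
  thus "k \<le> rank_aug k G S T" using B(3) by (simp add: card_image)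
qed

lemma term_deriv: "((\<lambda>p::real. c * p^t * (1-p)^m) has_real_derivative
   (if t = 0 then - (c * real m) else if t = 1 then c else 0)) (at 0)"
proof (cases t)
  case 0
  show ?thesis unfolding 0 by (auto intro!: derivative_eq_intros)
next
  case (Suc s)
  show ?thesis
  proof (cases s)
    case 0 show ?thesis unfolding Suc 0 by (auto intro!: derivative_eq_intros)
  next
    case (Suc r)
    show ?thesis unfolding \<open>t = Suc s\<close> Suc by (auto intro!: derivative_eq_intros)
  qed
qed

lemma poly_deriv:
  assumes n: "2 \<le> n"
  shows "((\<lambda>p::real. \<Sum>t<n. c t * p^t * (1-p)^(n-t-1)) has_real_derivative
     (c 1 - real (n-1) * c 0)) (at 0)"
proof -
  have "((\<lambda>p::real. \<Sum>t<n. c t * p^t * (1-p)^(n-t-1)) has_real_derivative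
     (\<Sum>t<n. (if t = 0 then - (c t * real (n-t-1)) else if t = 1 then c t else 0))) (at 0)"
    by (rule DERIV_sum, rule term_deriv)
  moreover have "(\<Sum>t<n. (if t = 0 then - (c t * real (n-t-1)) else if t = 1 then c t else 0))
     = (\<Sum>t<n. (if t = 0 then - (c t * real (n-t-1)) else 0) + (if t = 1 then c t else 0))"
    by (rule sum.cong) auto
  moreover have "\<dots> = c 1 - real (n-1) * c 0"
    using n by (simp add: sum.distrib)
  ultimately show ?thesis by simp
qed


lemma card_subsets: "card (subsets_of_card n g) = n choose g"
  unfolding subsets_of_card_def using n_subsets[of "{..<n}" g] by simp

lemma etilde_full:
  assumes G: "is_gen_matrix k n G" and d: "n - g < dmin k n G"
  shows "etilde2 k n G g h = real (n choose g) * real (k choose h) * real k"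
proof -
  have "etilde2 k n G g h = (\<Sum>S\<in>subsets_of_card n g. \<Sum>T\<in>subsets_of_card k h. real k)"
    unfolding etilde2_def
  proof (intro sum.cong refl)
    fix S T assume S: "S \<in> subsets_of_card n g" and T: "T \<in> subsets_of_card k h"
    have fS: "finite S" and fT: "finite T" using S T unfolding subsets_of_card_def
      by (auto intro: finite_subset)
    have "rank_sub k G S = k" using S d by (intro rank_full[OF G]) (auto simp: subsets_of_card_def)
    thus "real (rank_aug k G S T) = real k" using rank_aug_full fS fT by simp
  qed
  also have "\<dots> = real (n choose g) * real (k choose h) * real k" by (simp add: card_subsets)
  finally show ?thesis .
qed

lemma etilde_delta:
  "etilde2 k n G g h = real (n choose g) * real (k choose h) * real k - DeltaV k n G g h"
  unfolding etilde2_def DeltaV_def by (simp add: sum_subtractf card_subsets)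

lemma n_ge2:
  assumes G: "is_gen_matrix k n G" and d: "2 \<le> dmin k n G"
  shows "2 \<le> n"
proof (rule ccontr)
  assume "\<not> 2 \<le> n"
  hence "rank_sub k G {} = k" using G d by (intro rank_full) auto
  moreover have "rank_sub k G {} = 0" unfolding rank_sub_def
    using rank_wit[of "{}" k "gcol G"] by auto
  ultimately show False using G unfolding is_gen_matrix_def by simp
qed

lemma delta0:
  assumes G: "is_gen_matrix k n G" and d: "3 \<le> dmin k n G"
  shows "DeltaV k n G (n - 2) h = 0"
  using etilde_full[OF G, of "n-2" h] etilde_delta[of k n G "n-2" h] d by simp

lemma choose2: "real (n choose 2) * 2 = real n * (real n - 1)"
proof (induction n)
  case (Suc n)
  have "Suc n choose 2 = n + (n choose 2)" by (simp add: numeral_2_eq_2)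
  thus ?case using Suc by (simp add: algebra_simps)
qed simp

lemma IEV_code_deriv:
  assumes G: "is_gen_matrix k n G" and d: "2 \<le> dmin k n G"
  shows "((\<lambda>p. IEV_code k n G p q) has_real_derivative
     - (\<Sum>z\<le>k. q^z*(1-q)^(k-z) * (2 / real n) * DeltaV k n G (n-2) (k-z))) (at 0)"
proof -
  obtain m where nm: "n = Suc (Suc m)" using n_ge2[OF G d]
    by (metis add_2_eq_Suc le_add_diff_inverse)
  define c where "c t = (\<Sum>z\<le>k. a_tz k n G t z * q^z*(1-q)^(k-z))" for t
  have eq: "IEV_code k n G p q = 1 - 1 / real n * (\<Sum>t<n. c t * p^t * (1-p)^(n-t-1))" for p
    unfolding IEV_code_def c_def by (simp add: sum_distrib_right sum_distrib_left mult_ac)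
  have "((\<lambda>p. 1 - 1 / real n * (\<Sum>t<n. c t * p^t * (1-p)^(n-t-1))) has_real_derivative
      0 - 1 / real n * (c 1 - real (n-1) * c 0)) (at 0)"
    by (intro DERIV_diff DERIV_const DERIV_cmult poly_deriv) (simp add: nm)
  moreover have "c 1 - real (n-1) * c 0 =
     (\<Sum>z\<le>k. q^z*(1-q)^(k-z) * 2 * DeltaV k n G (n-2) (k-z))"
    unfolding c_def sum_distrib_left sum_subtractf[symmetric]
  proof (rule sum.cong[OF refl])
    fix z
    let ?K = "real (k choose (k-z)) * real k"
    have e0: "etilde2 k n G n (k-z) = ?K" using etilde_full[OF G, of n] d by simp
    have e1: "etilde2 k n G (Suc m) (k-z) = real n * ?K"
      using etilde_full[OF G, of "Suc m"] d nm by (simp add: binomial_Suc_n)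
    have e2: "etilde2 k n G m (k-z) = real (n choose 2) * ?K - DeltaV k n G m (k-z)"
      using etilde_delta[of k n G m] nm binomial_symmetric[of 2 n] by simp
    have a0: "a_tz k n G 0 z = 0" unfolding a_tz_def using e0 e1 nm by simp
    have h0: "2 * etilde2 k n G m (k-z) = (real (n choose 2) * 2) * ?K - 2 * DeltaV k n G m (k-z)"
      using e2 by (simp add: algebra_simps)
    have h: "2 * etilde2 k n G m (k-z) = (real n * (real n - 1)) * ?K - 2 * DeltaV k n G m (k-z)"
      using h0 unfolding choose2 .
    have rn: "real (n - 1) = real n - 1" using nm by simp
    have "a_tz k n G 1 z = real (n-1) * etilde2 k n G (Suc m) (k-z) - 2 * etilde2 k n G m (k-z)"
      unfolding a_tz_def using nm by simp
    also have "\<dots> = (real n - 1) * (real n * ?K) - ((real n * (real n - 1)) * ?K - 2 * DeltaV k n G m (k-z))"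
      using e1 h rn by simp
    also have "\<dots> = 2 * DeltaV k n G m (k-z)" by (simp add: algebra_simps)
    finally have a1: "a_tz k n G 1 z = 2 * DeltaV k n G m (k-z)" .
    show "a_tz k n G 1 z * q ^ z * (1 - q) ^ (k - z) - real (n - 1) * (a_tz k n G 0 z * q ^ z * (1 - q) ^ (k - z))
         = q ^ z * (1 - q) ^ (k - z) * 2 * DeltaV k n G (n - 2) (k - z)"
      using a0 a1 nm by simp
  qed
  ultimately have "((\<lambda>p. IEV_code k n G p q) has_real_derivative
      0 - 1 / real n * (\<Sum>z\<le>k. q^z*(1-q)^(k-z) * 2 * DeltaV k n G (n-2) (k-z))) (at 0)"
    unfolding eq by simp
  moreover have "0 - 1 / real n * (\<Sum>z\<le>k. q^z*(1-q)^(k-z) * 2 * DeltaV k n G (n-2) (k-z))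
     = - (\<Sum>z\<le>k. q^z*(1-q)^(k-z) * (2 / real n) * DeltaV k n G (n-2) (k-z))"
    by (simp add: sum_distrib_left mult_ac)
  ultimately show ?thesis by simp
qed

theorem mainTheorem8:
  fixes Jv Jc NV NC :: nat
    and lamr rhoS lamV rhoC :: "nat \<Rightarrow> real"
    and nV kV nC kC :: "nat \<Rightarrow> nat"
    and GV GC :: "nat \<Rightarrow> nat \<Rightarrow> nat \<Rightarrow> bool"
    and q :: real
  assumes q_range: "0 \<le> q" "q \<le> 1"
    and lamr_nonneg: "\<forall>j\<in>{2..Jv}. 0 \<le> lamr j"
    and lamr_supp: "\<forall>j. j \<notin> {2..Jv} \<longrightarrow> lamr j = 0"
    and lamV_nonneg: "\<forall>i<NV. 0 \<le> lamV i"
    and lam_sum: "(\<Sum>j=2..Jv. lamr j) + (\<Sum>i<NV. lamV i) = 1"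
    and rhoS_nonneg: "\<forall>j\<in>{2..Jc}. 0 \<le> rhoS j"
    and rhoS_supp: "\<forall>j. j \<notin> {2..Jc} \<longrightarrow> rhoS j = 0"
    and rhoC_nonneg: "\<forall>i<NC. 0 \<le> rhoC i"
    and rho_sum: "(\<Sum>j=2..Jc. rhoS j) + (\<Sum>i<NC. rhoC i) = 1"
    and V_codes: "\<forall>i<NV. is_gen_matrix (kV i) (nV i) (GV i)"
    and V_dmin: "\<forall>i<NV. 2 \<le> dmin (kV i) (nV i) (GV i)"
    and C_codes: "\<forall>i<NC. is_gen_matrix (kC i) (nC i) (GC i)"
    and C_dmin: "\<forall>i<NC. 2 \<le> dmin (kC i) (nC i) (GC i)"
    and DC_pos: "D_C Jc rhoS NC nC kC GC rhoC > 0"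
  shows
    "((\<lambda>p. IEV_ens Jv lamr NV nV kV GV lamV p q) has_real_derivative
        - (q * lamr 2 +
           (\<Sum>i\<in>{i. i < NV \<and> dmin (kV i) (nV i) (GV i) = 2}. \<Sum>z\<le>kV i.
              q ^ z * (1 - q) ^ (kV i - z) * (2 * lamV i / real (nV i))
              * DeltaV (kV i) (nV i) (GV i) (nV i - 2) (kV i - z)))) (at 0)
   \<and> ((- deriv (\<lambda>p. IEV_ens Jv lamr NV nV kV GV lamV p q) 0
          \<le> inverse (D_C Jc rhoS NC nC kC GC rhoC))
      \<longleftrightarrow>
      (q * lamr 2 +
           (\<Sum>i\<in>{i. i < NV \<and> dmin (kV i) (nV i) (GV i) = 2}. \<Sum>z\<le>kV i.
              q ^ z * (1 - q) ^ (kV i - z)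
              * (2 * lamV i * DeltaV (kV i) (nV i) (GV i) (nV i - 2) (kV i - z)
                 / real (nV i)))
       \<le> inverse (rho_SPC_deriv Jc rhoS +
           (\<Sum>i\<in>{i. i < NC \<and> dmin (kC i) (nC i) (GC i) = 2}.
              2 * rhoC i / real (nC i) * DeltaC (kC i) (nC i) (GC i) (nC i - 2)))))
   \<and> ((\<forall>i<NV. 3 \<le> dmin (kV i) (nV i) (GV i)) \<and> 0 < lamr 2 \<longrightarrow>
        ((- deriv (\<lambda>p. IEV_ens Jv lamr NV nV kV GV lamV p q) 0
            \<le> inverse (D_C Jc rhoS NC nC kC GC rhoC))
         \<longleftrightarrow> q \<le> inverse (lamr 2 * D_C Jc rhoS NC nC kC GC rhoC))
      \<and> ((- deriv (\<lambda>p. IEV_ens Jv lamr NV nV kV GV lamV p q) 0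
            = inverse (D_C Jc rhoS NC nC kC GC rhoC))
         \<longleftrightarrow> q = inverse (lamr 2 * D_C Jc rhoS NC nC kC GC rhoC))
      \<and> ((\<forall>i<NC. 3 \<le> dmin (kC i) (nC i) (GC i)) \<longrightarrow>
          ((- deriv (\<lambda>p. IEV_ens Jv lamr NV nV kV GV lamV p q) 0
              \<le> inverse (D_C Jc rhoS NC nC kC GC rhoC))
           \<longleftrightarrow> q \<le> inverse (lamr 2 * rho_SPC_deriv Jc rhoS))))"
proof -
  let ?F = "\<lambda>p. IEV_ens Jv lamr NV nV kV GV lamV p q"
  let ?D2 = "{i. i < NV \<and> dmin (kV i) (nV i) (GV i) = 2}"
  define X where "X i = (\<Sum>z\<le>kV i. q^z*(1-q)^(kV i - z) * (2 / real (nV i))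
      * DeltaV (kV i) (nV i) (GV i) (nV i - 2) (kV i - z))" for i
  define S where "S = q * lamr 2 + (\<Sum>i\<in>?D2. \<Sum>z\<le>kV i.
              q ^ z * (1 - q) ^ (kV i - z) * (2 * lamV i / real (nV i))
              * DeltaV (kV i) (nV i) (GV i) (nV i - 2) (kV i - z))"
  have rep: "((\<lambda>p. \<Sum>j=2..Jv. lamr j * (1 - q * p ^ (j - 1))) has_real_derivative - (q * lamr 2)) (at 0)"
  proof -
    have "((\<lambda>p. \<Sum>j=2..Jv. lamr j * (1 - q * p ^ (j - 1))) has_real_derivative
        (\<Sum>j=2..Jv. if j = 2 then - (q * lamr j) else 0)) (at 0)"
    proof (rule DERIV_sum)
      fix j assume "j \<in> {2..Jv}"
      hence j: "j = Suc (Suc (j - 2))" by auto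
      show "((\<lambda>p. lamr j * (1 - q * p ^ (j - 1))) has_real_derivative
          (if j = 2 then - (q * lamr j) else 0)) (at 0)"
      proof (cases "j - 2")
        case 0 show ?thesis by (subst j, unfold 0) (auto intro!: derivative_eq_intros simp: numeral_2_eq_2)
      next
        case (Suc s)
        hence jn: "j \<noteq> 2" by auto
        show ?thesis using jn by (subst j, unfold Suc) (auto intro!: derivative_eq_intros)
      qed
    qed
    moreover have "(\<Sum>j=2..Jv. if j = 2 then - (q * lamr j) else 0) = - (q * lamr 2)"
      using lamr_supp[rule_format, of 2] by (auto simp: sum.delta)
    ultimately show ?thesis by simp
  qed
  have comp: "((\<lambda>p. lamV i * IEV_code (kV i) (nV i) (GV i) p q) has_real_derivative
      lamV i * - X i) (at 0)" if "i < NV" for i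
    unfolding X_def using V_codes V_dmin that by (intro DERIV_cmult IEV_code_deriv) auto
  have all: "(?F has_real_derivative (- (q * lamr 2) + (\<Sum>i<NV. lamV i * - X i))) (at 0)"
    unfolding IEV_ens_def by (intro DERIV_add rep DERIV_sum comp) auto
  have X0: "X i = 0" if "i < NV" "i \<notin> ?D2" for i
  proof -
    have "3 \<le> dmin (kV i) (nV i) (GV i)" using V_dmin that by force
    thus ?thesis unfolding X_def using delta0 V_codes that(1) by simp
  qed
  have "(\<Sum>i<NV. lamV i * X i) = (\<Sum>i\<in>?D2. lamV i * X i)"
    by (rule sum.mono_neutral_right) (use X0 in auto)
  also have "\<dots> = (\<Sum>i\<in>?D2. \<Sum>z\<le>kV i.
              q ^ z * (1 - q) ^ (kV i - z) * (2 * lamV i / real (nV i))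
              * DeltaV (kV i) (nV i) (GV i) (nV i - 2) (kV i - z))"
    unfolding X_def by (simp add: sum_distrib_left mult_ac)
  finally have "- (q * lamr 2) + (\<Sum>i<NV. lamV i * - X i) = - S"
    unfolding S_def by (simp add: sum_negf)
  with all have der: "(?F has_real_derivative - S) (at 0)" by simp
  hence dd: "- deriv ?F 0 = S" using DERIV_imp_deriv by fastforce
  have SS: "S = q * lamr 2 + (\<Sum>i\<in>?D2. \<Sum>z\<le>kV i.
              q ^ z * (1 - q) ^ (kV i - z)
              * (2 * lamV i * DeltaV (kV i) (nV i) (GV i) (nV i - 2) (kV i - z)
                 / real (nV i)))"
    unfolding S_def by (intro arg_cong2[where f="(+)"] refl sum.cong) auto
  have part2: "(- deriv ?F 0 \<le> inverse (D_C Jc rhoS NC nC kC GC rhoC)) \<longleftrightarrow>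
      (q * lamr 2 + (\<Sum>i\<in>?D2. \<Sum>z\<le>kV i.
              q ^ z * (1 - q) ^ (kV i - z)
              * (2 * lamV i * DeltaV (kV i) (nV i) (GV i) (nV i - 2) (kV i - z)
                 / real (nV i)))
       \<le> inverse (rho_SPC_deriv Jc rhoS +
           (\<Sum>i\<in>{i. i < NC \<and> dmin (kC i) (nC i) (GC i) = 2}.
              2 * rhoC i / real (nC i) * DeltaC (kC i) (nC i) (GC i) (nC i - 2))))"
    unfolding dd SS D_C_def ..
  have part3: "((\<forall>i<NV. 3 \<le> dmin (kV i) (nV i) (GV i)) \<and> 0 < lamr 2 \<longrightarrow>
        ((- deriv ?F 0 \<le> inverse (D_C Jc rhoS NC nC kC GC rhoC))
         \<longleftrightarrow> q \<le> inverse (lamr 2 * D_C Jc rhoS NC nC kC GC rhoC))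
      \<and> ((- deriv ?F 0 = inverse (D_C Jc rhoS NC nC kC GC rhoC))
         \<longleftrightarrow> q = inverse (lamr 2 * D_C Jc rhoS NC nC kC GC rhoC))
      \<and> ((\<forall>i<NC. 3 \<le> dmin (kC i) (nC i) (GC i)) \<longrightarrow>
          ((- deriv ?F 0 \<le> inverse (D_C Jc rhoS NC nC kC GC rhoC))
           \<longleftrightarrow> q \<le> inverse (lamr 2 * rho_SPC_deriv Jc rhoS))))"
  proof (intro impI)
    assume h: "(\<forall>i<NV. 3 \<le> dmin (kV i) (nV i) (GV i)) \<and> 0 < lamr 2"
    have e: "?D2 = {}" using h by force
    have d1: "- deriv ?F 0 = q * lamr 2" unfolding dd S_def e by simp
    define D where "D = D_C Jc rhoS NC nC kC GC rhoC"
    define l where "l = lamr 2"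
    have Dp: "0 < D" and lp: "0 < l" using DC_pos h unfolding D_def l_def by auto
    have i1: "(q * l \<le> inverse D) \<longleftrightarrow> q \<le> inverse (l * D)"
      using Dp lp by (simp add: inverse_eq_divide field_simps)
    have i2: "(q * l = inverse D) \<longleftrightarrow> q = inverse (l * D)"
      using Dp lp by (simp add: inverse_eq_divide field_simps)
    have i3: "(\<forall>i<NC. 3 \<le> dmin (kC i) (nC i) (GC i)) \<longrightarrow> D = rho_SPC_deriv Jc rhoS"
    proof
      assume "\<forall>i<NC. 3 \<le> dmin (kC i) (nC i) (GC i)"
      hence e2: "{i. i < NC \<and> dmin (kC i) (nC i) (GC i) = 2} = {}" by force
      show "D = rho_SPC_deriv Jc rhoS" unfolding D_def D_C_def e2 by simp
    qed
    show "((- deriv ?F 0 \<le> inverse (D_C Jc rhoS NC nC kC GC rhoC))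
         \<longleftrightarrow> q \<le> inverse (lamr 2 * D_C Jc rhoS NC nC kC GC rhoC))
      \<and> ((- deriv ?F 0 = inverse (D_C Jc rhoS NC nC kC GC rhoC))
         \<longleftrightarrow> q = inverse (lamr 2 * D_C Jc rhoS NC nC kC GC rhoC))
      \<and> ((\<forall>i<NC. 3 \<le> dmin (kC i) (nC i) (GC i)) \<longrightarrow>
          ((- deriv ?F 0 \<le> inverse (D_C Jc rhoS NC nC kC GC rhoC))
           \<longleftrightarrow> q \<le> inverse (lamr 2 * rho_SPC_deriv Jc rhoS)))"
      using i1 i2 i3 unfolding d1 D_def[symmetric] l_def[symmetric] by auto
  qed
  show ?thesis using der[unfolded S_def] part2 part3 by blast
qed

end
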